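(* Let $n$ be a positive integer and let $\xi>2$ be an integer. If $C_{\xi}(n)\neq\emptyset$, then $\xi\le \log_2(n+1)+1$.
   Context: A partition of $n$ is identified with a point $x=(x_1,\dots,x_n)\in\mathbb{Z}_{\ge 0}^n$ satisfying $x_1+2x_2+\dots+nx_n=n$, where $x_i$ is the number of parts equal to $i$. Let $P(n)$ be the set of partitions of $n$ and $P_n=\mathrm{conv}\,P(n)\subset\mathbb{R}^n$, with vertex set $\mathrm{Vert}\,P_n$. For $x\in P(n)\setminus \mathrm{Vert}\,P_n$, let $\xi(x)$ be the minimal number $k$ such that $x=\sum_{j=1}^k\lambda_j y^j$ with $y^1,\dots,y^k\in P(n)$ all different from $x$, $\lambda_j>0$, $\sum_j\lambda_j=1$. For an integer $\xi\ge 2$, $C_\xi(n)$ denotes the set of partitions $x\in P(n)\setminus\mathrm{Vert}\,P_n$ with $\xi(x)=\xi$. *)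

theory Defs
  imports "HOL-Analysis.Analysis"
begin

text \<open>We represent points of R^n as functions on nat,
  coordinates i in {1..n}; coordinates outside {1..n} are 0.\<close>

definition partitions :: "nat \<Rightarrow> (nat \<Rightarrow> nat) set" where
  "partitions n = {x. (\<forall>i. x i \<noteq> 0 \<longrightarrow> 1 \<le> i \<and> i \<le> n) \<and> (\<Sum>i=1..n. i * x i) = n}"

definition to_real :: "(nat \<Rightarrow> nat) \<Rightarrow> nat \<Rightarrow> real" where
  "to_real x = (\<lambda>i. real (x i))"

definition conv_comb_of :: "(nat \<Rightarrow> real) \<Rightarrow> (nat \<Rightarrow> nat) set \<Rightarrow> nat \<Rightarrow> bool" where
  "conv_comb_of z Y k \<longleftrightarrow>
     (\<exists>(y :: nat \<Rightarrow> nat \<Rightarrow> nat) (w::nat \<Rightarrow> real).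
        (\<forall>j<k. y j \<in> Y) \<and> (\<forall>j<k. w j > 0) \<and> (\<Sum>j<k. w j) = 1 \<and>
        (\<forall>i. z i = (\<Sum>j<k. w j * real (y j i))))"

definition Pn :: "nat \<Rightarrow> (nat \<Rightarrow> real) set" where
  "Pn n = {z. \<exists>k. conv_comb_of z (partitions n) k}"

definition VertPn :: "nat \<Rightarrow> (nat \<Rightarrow> real) set" where
  "VertPn n = {z \<in> Pn n. \<not> (\<exists>a\<in>Pn n. \<exists>b\<in>Pn n. \<exists>t::real. a \<noteq> b \<and> 0 < t \<and> t < 1 \<and>
                 z = (\<lambda>i. t * a i + (1 - t) * b i))}"

definition xi_num :: "nat \<Rightarrow> (nat \<Rightarrow> nat) \<Rightarrow> nat" where
  "xi_num n x = (LEAST k. conv_comb_of (to_real x) (partitions n - {x}) k)"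

definition C_xi :: "nat \<Rightarrow> nat \<Rightarrow> (nat \<Rightarrow> nat) set" where
  "C_xi \<xi> n = {x \<in> partitions n. to_real x \<notin> VertPn n \<and> xi_num n x = \<xi>}"

end

theory Submission
  imports Defs
begin

lemma lin_dep:
  fixes v :: "'j \<Rightarrow> nat \<Rightarrow> real"
  assumes "finite J" "finite K" "card J < card K" "\<forall>j\<in>K. \<forall>i. i \<notin> J \<longrightarrow> v j i = 0"
  shows "\<exists>c. (\<exists>j\<in>K. c j \<noteq> 0) \<and> (\<forall>i. (\<Sum>j\<in>K. c j * v j i) = 0)"
  using assms
proof (induction J arbitrary: K v rule: finite_induct)
  case empty
  then obtain j0 where j0: "j0 \<in> K" by fastforce
  define c where "c = (\<lambda>j. if j = j0 then (1::real) else 0)"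
  have "\<forall>i. (\<Sum>j\<in>K. c j * v j i) = 0"
  proof
    fix i
    have "(\<Sum>j\<in>K. c j * v j i) = (\<Sum>j\<in>K. if j = j0 then v j i else 0)"
      by (rule sum.cong) (auto simp: c_def)
    also have "\<dots> = v j0 i" using j0 empty by simp
    also have "\<dots> = 0" using empty j0 by auto
    finally show "(\<Sum>j\<in>K. c j * v j i) = 0" .
  qed
  moreover have "c j0 \<noteq> 0" by (simp add: c_def)
  ultimately show ?case using j0 by blast
next
  case (insert a J)
  show ?case
  proof (cases "\<forall>j\<in>K. v j a = 0")
    case True
    have "\<forall>j\<in>K. \<forall>i. i \<notin> J \<longrightarrow> v j i = 0"
      using insert.prems True by (metis insertE)
    moreover have "card J < card K" using insert by simp
    ultimately show ?thesis using insert by blast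
  next
    case False
    then obtain j0 where j0: "j0 \<in> K" "v j0 a \<noteq> 0" by blast
    define K' where "K' = K - {j0}"
    define u where "u = (\<lambda>j i. v j i - (v j a / v j0 a) * v j0 i)"
    have supp: "\<forall>j\<in>K'. \<forall>i. i \<notin> J \<longrightarrow> u j i = 0"
    proof (intro ballI allI impI)
      fix j i assume j: "j \<in> K'" and i: "i \<notin> J"
      show "u j i = 0"
      proof (cases "i = a")
        case True then show ?thesis using j0 by (simp add: u_def)
      next
        case False
        then have "i \<notin> insert a J" using i by simp
        then show ?thesis using insert.prems j j0 by (simp add: u_def K'_def)
      qed
    qed
    have "card K' = card K - 1" using j0 insert.prems by (simp add: K'_def)
    moreover have "card (insert a J) = Suc (card J)" using insert by simp
    ultimately have cK: "card J < card K'" using insert.prems by linarith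
    have fK': "finite K'" using insert.prems by (simp add: K'_def)
    obtain d where d: "\<exists>j\<in>K'. d j \<noteq> 0" "\<forall>i. (\<Sum>j\<in>K'. d j * u j i) = 0"
      using insert.IH[OF fK' cK supp] by blast
    define c where "c = (\<lambda>j. if j = j0 then - (\<Sum>l\<in>K'. d l * v l a / v j0 a) else d j)"
    have "\<forall>i. (\<Sum>j\<in>K. c j * v j i) = 0"
    proof
      fix i
      have "(\<Sum>j\<in>K. c j * v j i) = c j0 * v j0 i + (\<Sum>j\<in>K'. c j * v j i)"
        using j0 insert.prems by (simp add: K'_def sum.remove)
      also have "(\<Sum>j\<in>K'. c j * v j i) = (\<Sum>j\<in>K'. d j * v j i)"
        by (rule sum.cong) (auto simp: c_def K'_def)
      also have "c j0 = - (\<Sum>l\<in>K'. d l * v l a / v j0 a)" by (simp add: c_def)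
      finally have e1: "(\<Sum>j\<in>K. c j * v j i) = - (\<Sum>l\<in>K'. d l * v l a / v j0 a) * v j0 i + (\<Sum>j\<in>K'. d j * v j i)" .
      have "(\<Sum>j\<in>K'. d j * u j i) = (\<Sum>j\<in>K'. d j * v j i - (d j * v j a / v j0 a) * v j0 i)"
        by (rule sum.cong) (auto simp: u_def algebra_simps)
      also have "\<dots> = (\<Sum>j\<in>K'. d j * v j i) - (\<Sum>j\<in>K'. d j * v j a / v j0 a) * v j0 i"
        by (simp add: sum_subtractf sum_distrib_right)
      finally show "(\<Sum>j\<in>K. c j * v j i) = 0" using d(2) e1 by simp
    qed
    moreover obtain j1 where "j1 \<in> K'" "d j1 \<noteq> 0" using d by blast
    then have "j1 \<in> K" "c j1 \<noteq> 0" by (auto simp: c_def K'_def)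
    ultimately show ?thesis by blast
  qed
qed

definition ccS :: "(nat \<Rightarrow> real) \<Rightarrow> (nat \<Rightarrow> nat) set \<Rightarrow> 'j set \<Rightarrow> ('j \<Rightarrow> nat \<Rightarrow> nat) \<Rightarrow> ('j \<Rightarrow> real) \<Rightarrow> bool" where
  "ccS z Y K y w \<longleftrightarrow> finite K \<and> (\<forall>j\<in>K. y j \<in> Y \<and> 0 < w j) \<and> sum w K = 1 \<and>
     (\<forall>i. z i = (\<Sum>j\<in>K. w j * real (y j i)))"

lemma ccS_to:
  assumes "ccS z Y K y w"
  shows "conv_comb_of z Y (card K)"
proof -
  have fK: "finite K" using assms by (simp add: ccS_def)
  obtain h where h: "bij_betw h {0..<card K} K" using ex_bij_betw_nat_finite[OF fK] by blast
  have hl: "bij_betw h {..<card K} K" using h by (simp add: atLeast0LessThan)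
  have hin: "\<And>j. j < card K \<Longrightarrow> h j \<in> K" using hl by (auto simp: bij_betw_def)
  show ?thesis unfolding conv_comb_of_def
  proof (intro exI conjI allI impI)
    fix j assume "j < card K"
    then show "(y \<circ> h) j \<in> Y" "0 < (w \<circ> h) j" using hin assms by (auto simp: ccS_def)
  next
    show "(\<Sum>j<card K. (w \<circ> h) j) = 1" using sum.reindex_bij_betw[OF hl, of w] assms
      by (simp add: ccS_def)
  next
    fix i
    show "z i = (\<Sum>j<card K. (w \<circ> h) j * real ((y \<circ> h) j i))"
      using sum.reindex_bij_betw[OF hl, of "\<lambda>j. w j * real (y j i)"] assms
      by (simp add: ccS_def)
  qed
qed

lemma cc_to_ccS:
  assumes "conv_comb_of z Y k"
  shows "\<exists>y w. ccS z Y {..<k} y w"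
  using assms unfolding conv_comb_of_def ccS_def by auto

lemma cara_step:
  assumes cc: "ccS z Y K y w" and fI: "finite I"
    and sup: "\<forall>j\<in>K. \<forall>i. y j i \<noteq> 0 \<longrightarrow> i \<in> I" and cK: "card I + 1 < card K"
  shows "\<exists>K' w'. K' \<subseteq> K \<and> card K' < card K \<and> ccS z Y K' y w'"
proof -
  have fK: "finite K" and yY: "\<forall>j\<in>K. y j \<in> Y \<and> 0 < w j" and sw: "sum w K = 1"
    and zz: "\<forall>i. z i = (\<Sum>j\<in>K. w j * real (y j i))" using cc by (auto simp: ccS_def)
  define v where "v = (\<lambda>j i. if i = 0 then (1::real) else real (y j (i - 1)))"
  define J where "J = insert 0 (Suc ` I)"
  have fJ: "finite J" using fI by (simp add: J_def)
  have "card J \<le> Suc (card (Suc ` I))" unfolding J_def by (rule card_insert_le_m1) auto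
  also have "card (Suc ` I) = card I" by (simp add: card_image)
  finally have cJ: "card J < card K" using cK by simp
  have vs: "\<forall>j\<in>K. \<forall>i. i \<notin> J \<longrightarrow> v j i = 0"
  proof (intro ballI allI impI)
    fix j i assume j: "j \<in> K" and i: "i \<notin> J"
    then have "i \<noteq> 0" by (simp add: J_def)
    then have "i = Suc (i - 1)" by simp
    then have "i - 1 \<notin> I" using i unfolding J_def by (metis image_eqI insertCI)
    then have "y j (i - 1) = 0" using sup j by blast
    then show "v j i = 0" using \<open>i \<noteq> 0\<close> by (simp add: v_def)
  qed
  obtain c where c: "\<exists>j\<in>K. c j \<noteq> 0" "\<forall>i. (\<Sum>j\<in>K. c j * v j i) = 0"
    using lin_dep[OF fJ fK cJ vs] by blast
  have c0: "sum c K = 0" using c(2)[rule_format, of 0] by (simp add: v_def)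
  have ci: "\<forall>i. (\<Sum>j\<in>K. c j * real (y j i)) = 0"
  proof
    fix i show "(\<Sum>j\<in>K. c j * real (y j i)) = 0" using c(2)[rule_format, of "Suc i"] by (simp add: v_def)
  qed
  have "\<exists>j\<in>K. 0 < c j"
  proof (rule ccontr)
    assume "\<not> ?thesis"
    then have nn: "\<And>j. j \<in> K \<Longrightarrow> 0 \<le> - c j" by force
    have "sum (\<lambda>j. - c j) K = 0" using c0 by (simp add: sum_negf)
    then have "\<forall>j\<in>K. - c j = 0" using sum_nonneg_eq_0_iff[of K "\<lambda>j. - c j"] fK nn by blast
    then show False using c(1) by auto
  qed
  define P where "P = {j\<in>K. 0 < c j}"
  have fP: "finite P" and neP: "P \<noteq> {}" using fK \<open>\<exists>j\<in>K. 0 < c j\<close> by (auto simp: P_def)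
  define t where "t = Min ((\<lambda>j. w j / c j) ` P)"
  have "t \<in> (\<lambda>j. w j / c j) ` P" unfolding t_def using fP neP by (intro Min_in) auto
  then obtain j1 where j1: "j1 \<in> P" "t = w j1 / c j1" by blast
  have tle: "\<And>j. j \<in> P \<Longrightarrow> t \<le> w j / c j" unfolding t_def using fP by (intro Min_le) auto
  have tpos: "0 < t" using j1 yY by (auto simp: P_def)
  define w' where "w' = (\<lambda>j. w j - t * c j)"
  have w'nn: "\<And>j. j \<in> K \<Longrightarrow> 0 \<le> w' j"
  proof -
    fix j assume j: "j \<in> K"
    show "0 \<le> w' j"
    proof (cases "0 < c j")
      case True
      then have "t \<le> w j / c j" using tle j by (simp add: P_def)
      then have "t * c j \<le> w j" using True by (simp add: le_divide_eq)
      then show ?thesis by (simp add: w'_def)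
    next
      case False
      then have "t * c j \<le> 0" using tpos by (simp add: mult_nonneg_nonpos)
      moreover have "0 < w j" using yY j by blast
      ultimately show ?thesis by (simp add: w'_def)
    qed
  qed
  have w'j1: "w' j1 = 0" using j1 by (simp add: w'_def P_def)
  define K' where "K' = {j\<in>K. w' j \<noteq> 0}"
  have sub: "K' \<subseteq> K" by (auto simp: K'_def)
  have "j1 \<in> K" "j1 \<notin> K'" using j1 w'j1 by (auto simp: P_def K'_def)
  then have "K' \<subset> K" using sub by blast
  then have cK': "card K' < card K" using fK by (simp add: psubset_card_mono)
  have zero_out: "\<forall>j\<in>K - K'. w' j = 0" by (auto simp: K'_def)
  have "sum w' K' = sum w' K"
    using sum.mono_neutral_right[OF fK sub, of w'] zero_out by simp
  also have "\<dots> = sum w K - t * sum c K" by (simp add: w'_def sum_subtractf sum_distrib_left)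
  finally have s1: "sum w' K' = 1" using sw c0 by simp
  have zz': "\<forall>i. z i = (\<Sum>j\<in>K'. w' j * real (y j i))"
  proof
    fix i
    have "(\<Sum>j\<in>K'. w' j * real (y j i)) = (\<Sum>j\<in>K. w' j * real (y j i))"
      using sum.mono_neutral_right[OF fK sub, of "\<lambda>j. w' j * real (y j i)"] zero_out by simp
    also have "\<dots> = (\<Sum>j\<in>K. w j * real (y j i)) - t * (\<Sum>j\<in>K. c j * real (y j i))"
      by (simp add: w'_def sum_subtractf sum_distrib_left algebra_simps)
    finally show "z i = (\<Sum>j\<in>K'. w' j * real (y j i))" using zz ci by simp
  qed
  have "ccS z Y K' y w'" unfolding ccS_def
  proof (intro conjI ballI)
    show "finite K'" using fK sub finite_subset by blast
    fix j assume "j \<in> K'"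
    then show "y j \<in> Y" "0 < w' j" using yY w'nn sub by (auto simp: K'_def less_le)
  qed (use s1 zz' in auto)
  then show ?thesis using sub cK' by blast
qed

lemma ccS_support:
  assumes "ccS (to_real x) Y K y w"
  shows "\<forall>j\<in>K. \<forall>i. y j i \<noteq> 0 \<longrightarrow> x i \<noteq> 0"
proof (intro ballI allI impI)
  fix j i assume j: "j \<in> K" and yji: "y j i \<noteq> 0"
  show "x i \<noteq> 0"
  proof
    assume "x i = 0"
    moreover have "real (x i) = (\<Sum>j\<in>K. w j * real (y j i))" using assms by (simp add: ccS_def to_real_def)
    ultimately have "(\<Sum>j\<in>K. w j * real (y j i)) = 0" by simp
    moreover have "finite K" "\<And>j. j \<in> K \<Longrightarrow> 0 \<le> w j * real (y j i)" using assms
      by (auto simp: ccS_def less_imp_le)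
    ultimately have "\<forall>l\<in>K. w l * real (y l i) = 0" using sum_nonneg_eq_0_iff[of K "\<lambda>l. w l * real (y l i)"] by simp
    then have "w j * real (y j i) = 0" using j by blast
    then show False using assms j yji by (auto simp: ccS_def)
  qed
qed

lemma remove_x:
  assumes cc: "ccS z P K y w" and zx: "z = to_real x" and ex: "\<exists>j\<in>K. y j \<noteq> x"
  shows "ccS z (P - {x}) {j\<in>K. y j \<noteq> x} y (\<lambda>j. w j / sum w {j\<in>K. y j \<noteq> x})"
proof -
  define K1 where "K1 = {j\<in>K. y j \<noteq> x}"
  have fK: "finite K" and yY: "\<forall>j\<in>K. y j \<in> P \<and> 0 < w j" and sw: "sum w K = 1"
    and zz: "\<forall>i. z i = (\<Sum>j\<in>K. w j * real (y j i))" using cc by (auto simp: ccS_def)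
  have sub: "K1 \<subseteq> K" by (auto simp: K1_def)
  have fK1: "finite K1" using fK sub finite_subset by blast
  define s where "s = sum w K1"
  obtain j0 where j0: "j0 \<in> K" "y j0 \<noteq> x" using ex by blast
  then have j0K1: "j0 \<in> K1" by (simp add: K1_def)
  have "w j0 \<le> s" unfolding s_def
  proof (rule member_le_sum)
    show "j0 \<in> K1" by fact
    show "finite K1" by fact
    fix l assume "l \<in> K1 - {j0}"
    then show "0 \<le> w l" using yY sub by (auto intro: less_imp_le)
  qed
  then have spos: "0 < s" using yY j0 by fastforce
  have ssum: "sum w K = sum w (K - K1) + s" unfolding s_def by (rule sum.subset_diff[OF sub fK])
  have zi: "\<forall>i. (\<Sum>j\<in>K1. w j * real (y j i)) = s * z i"
  proof
    fix i
    have "(\<Sum>j\<in>K. w j * real (y j i)) = (\<Sum>j\<in>K - K1. w j * real (y j i)) + (\<Sum>j\<in>K1. w j * real (y j i))"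
      by (rule sum.subset_diff[OF sub fK])
    also have "(\<Sum>j\<in>K - K1. w j * real (y j i)) = (\<Sum>j\<in>K - K1. w j * z i)"
      by (rule sum.cong) (auto simp: K1_def zx to_real_def)
    also have "\<dots> = sum w (K - K1) * z i" by (simp add: sum_distrib_right)
    finally have "z i = sum w (K - K1) * z i + (\<Sum>j\<in>K1. w j * real (y j i))" using zz by simp
    moreover have "sum w (K - K1) = 1 - s" using ssum sw by simp
    ultimately show "(\<Sum>j\<in>K1. w j * real (y j i)) = s * z i" by (simp add: algebra_simps)
  qed
  show ?thesis unfolding K1_def[symmetric] s_def[symmetric] ccS_def
  proof (intro conjI ballI allI)
    show "finite K1" by fact
  next
    fix j assume "j \<in> K1"
    then show "y j \<in> P - {x}" "0 < w j / s" using yY spos by (auto simp: K1_def)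
  next
    show "(\<Sum>j\<in>K1. w j / s) = 1" using spos by (simp add: sum_divide_distrib[symmetric] s_def)
  next
    fix i
    have "(\<Sum>j\<in>K1. w j / s * real (y j i)) = (\<Sum>j\<in>K1. w j * real (y j i)) / s"
      by (simp add: sum_divide_distrib)
    then show "z i = (\<Sum>j\<in>K1. w j / s * real (y j i))" using zi spos by simp
  qed
qed

lemma mid:
  assumes x: "x \<in> partitions n" and a: "\<forall>i. a i \<le> x i" and b: "\<forall>i. b i \<le> x i" and ab: "a \<noteq> b"
    and s: "(\<Sum>i=1..n. i * a i) = (\<Sum>i=1..n. i * b i)"
  shows "conv_comb_of (to_real x) (partitions n - {x}) 2"
proof -
  define y0 where "y0 = (\<lambda>i. x i - a i + b i)"
  define y1 where "y1 = (\<lambda>i. x i + a i - b i)"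
  have xs: "\<forall>i. x i \<noteq> 0 \<longrightarrow> 1 \<le> i \<and> i \<le> n" "(\<Sum>i=1..n. i * x i) = n" using x by (auto simp: partitions_def)
  have e0: "\<And>i. i * y0 i + i * a i = i * x i + i * b i"
  proof -
    fix i
    have "y0 i + a i = x i + b i" using a[rule_format, of i] by (simp add: y0_def)
    then show "i * y0 i + i * a i = i * x i + i * b i" by (metis add_mult_distrib2)
  qed
  have "(\<Sum>i=1..n. i * y0 i + i * a i) = (\<Sum>i=1..n. i * x i + i * b i)"
    using e0 by simp
  then have "(\<Sum>i=1..n. i * y0 i) = n" using s xs by (simp add: sum.distrib)
  moreover have "\<forall>i. y0 i \<noteq> 0 \<longrightarrow> 1 \<le> i \<and> i \<le> n" using xs b by (metis add_eq_0_iff_both_eq_0 le_zero_eq y0_def zero_diff)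
  ultimately have y0P: "y0 \<in> partitions n" by (simp add: partitions_def)
  have e1: "\<And>i. i * y1 i + i * b i = i * x i + i * a i"
  proof -
    fix i
    have "y1 i + b i = x i + a i" using b[rule_format, of i] by (simp add: y1_def)
    then show "i * y1 i + i * b i = i * x i + i * a i" by (metis add_mult_distrib2)
  qed
  have "(\<Sum>i=1..n. i * y1 i + i * b i) = (\<Sum>i=1..n. i * x i + i * a i)"
    using e1 by simp
  then have "(\<Sum>i=1..n. i * y1 i) = n" using s xs by (simp add: sum.distrib)
  moreover have "\<forall>i. y1 i \<noteq> 0 \<longrightarrow> 1 \<le> i \<and> i \<le> n" using xs a by (metis add_eq_0_iff_both_eq_0 le_zero_eq y1_def zero_diff)
  ultimately have y1P: "y1 \<in> partitions n" by (simp add: partitions_def)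
  have "y0 \<noteq> x"
  proof
    assume "y0 = x"
    have "\<forall>i. a i = b i"
    proof
      fix i
      have "y0 i = x i" using \<open>y0 = x\<close> by simp
      then show "a i = b i" using a[rule_format, of i] unfolding y0_def by arith
    qed
    then show False using ab by auto
  qed
  have "y1 \<noteq> x"
  proof
    assume "y1 = x"
    have "\<forall>i. a i = b i"
    proof
      fix i
      have "y1 i = x i" using \<open>y1 = x\<close> by simp
      then show "a i = b i" using b[rule_format, of i] unfolding y1_def by arith
    qed
    then show False using ab by auto
  qed
  show ?thesis unfolding conv_comb_of_def
  proof (intro exI[of _ "\<lambda>j. if j = 0 then y0 else y1"] exI[of _ "\<lambda>j. 1/2"] conjI allI impI)
    fix j :: nat assume "j < 2"
    then show "(if j = 0 then y0 else y1) \<in> partitions n - {x}" using y0P y1P \<open>y0 \<noteq> x\<close> \<open>y1 \<noteq> x\<close> by auto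
  next
    fix j :: nat show "(0::real) < 1/2" by simp
  next
    show "(\<Sum>j<(2::nat). (1::real)/2) = 1" by simp
  next
    fix i
    have "real (y0 i) + real (y1 i) = 2 * real (x i)"
      using a[rule_format, of i] b[rule_format, of i] by (simp add: y0_def y1_def of_nat_diff)
    then show "to_real x i = (\<Sum>j<(2::nat). 1 / 2 * real ((if j = 0 then y0 else y1) i))"
      by (simp add: to_real_def eval_nat_numeral)
  qed
qed

lemma count:
  assumes x: "x \<in> partitions n"
    and inj: "\<And>a b. \<forall>i. a i \<le> x i \<Longrightarrow> \<forall>i. b i \<le> x i \<Longrightarrow>
       (\<Sum>i=1..n. i * a i) = (\<Sum>i=1..n. i * b i) \<Longrightarrow> a = b"
  shows "2 ^ card {i. x i \<noteq> 0} \<le> n + 1"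
proof -
  define I where "I = {i. x i \<noteq> 0}"
  have I1n: "I \<subseteq> {1..n}" using x by (auto simp: partitions_def I_def)
  have fI: "finite I" using I1n finite_subset by blast
  define ind :: "nat set \<Rightarrow> nat \<Rightarrow> nat" where "ind = (\<lambda>S i. if i \<in> S then 1 else (0::nat))"
  have indle: "\<And>S. S \<subseteq> I \<Longrightarrow> \<forall>i. ind S i \<le> x i" by (auto simp: ind_def I_def)
  have indsum: "\<And>S. S \<subseteq> I \<Longrightarrow> (\<Sum>i=1..n. i * ind S i) = \<Sum> S"
  proof -
    fix S assume "S \<subseteq> I"
    then have "S \<subseteq> {1..n}" using I1n by blast
    have "(\<Sum>i=1..n. i * ind S i) = (\<Sum>i\<in>{1..n}. if i \<in> S then i else 0)"
      by (rule sum.cong) (auto simp: ind_def)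
    also have "\<dots> = \<Sum> S" using \<open>S \<subseteq> {1..n}\<close> by (simp add: sum.If_cases Int_absorb1)
    finally show "(\<Sum>i=1..n. i * ind S i) = \<Sum> S" .
  qed
  have "inj_on (\<lambda>S. \<Sum> S) (Pow I)"
  proof (rule inj_onI)
    fix S T assume "S \<in> Pow I" "T \<in> Pow I" "\<Sum> S = \<Sum> T"
    then have ST: "S \<subseteq> I" "T \<subseteq> I" "\<Sum> S = \<Sum> T" by auto
    have "(\<Sum>i=1..n. i * ind S i) = (\<Sum>i=1..n. i * ind T i)" using indsum[OF ST(1)] indsum[OF ST(2)] ST(3) by simp
    then have "ind S = ind T" by (rule inj[OF indle[OF ST(1)] indle[OF ST(2)]])
    show "S = T"
    proof (rule set_eqI)
      fix i
      have "ind S i = ind T i" using \<open>ind S = ind T\<close> by simp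
      then show "i \<in> S \<longleftrightarrow> i \<in> T" by (simp add: ind_def split: if_splits)
    qed
  qed
  moreover have "(\<lambda>S. \<Sum> S) ` Pow I \<subseteq> {0..n}"
  proof
    fix m assume "m \<in> (\<lambda>S. \<Sum> S) ` Pow I"
    then obtain S where S: "S \<subseteq> I" "m = \<Sum> S" by blast
    have "(\<Sum>i=1..n. i * ind S i) \<le> (\<Sum>i=1..n. i * x i)"
    proof (rule sum_mono)
      fix i show "i * ind S i \<le> i * x i" using indle[OF S(1)] by simp
    qed
    then show "m \<in> {0..n}" using S indsum x by (auto simp: partitions_def)
  qed
  ultimately have "card (Pow I) \<le> card {0..n}" by (rule card_inj_on_le) simp
  then show ?thesis using fI by (simp add: card_Pow I_def)
qed

lemma exists_comb:
  assumes x: "x \<in> partitions n" and nv: "to_real x \<notin> VertPn n"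
  shows "\<exists>k. conv_comb_of (to_real x) (partitions n - {x}) k"
proof -
  have "conv_comb_of (to_real x) (partitions n) 1" unfolding conv_comb_of_def
    by (rule exI[of _ "\<lambda>_. x"], rule exI[of _ "\<lambda>_. 1"]) (use x in \<open>auto simp: to_real_def\<close>)
  then have "to_real x \<in> Pn n" by (auto simp: Pn_def)
  then obtain a b t where ab: "a \<in> Pn n" "b \<in> Pn n" "a \<noteq> b" "0 < t" "t < 1"
    and xab: "to_real x = (\<lambda>i. t * a i + (1 - t) * b i)"
    using nv unfolding VertPn_def by blast
  obtain ka where "conv_comb_of a (partitions n) ka" using ab(1) by (auto simp: Pn_def)
  then obtain ya wa where A: "ccS a (partitions n) {..<ka} ya wa" using cc_to_ccS by blast
  obtain kb where "conv_comb_of b (partitions n) kb" using ab(2) by (auto simp: Pn_def)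
  then obtain yb wb where B: "ccS b (partitions n) {..<kb} yb wb" using cc_to_ccS by blast
  define K where "K = {..<ka} <+> {..<kb}"
  define y where "y = case_sum ya yb"
  define w where "w = case_sum (\<lambda>j. t * wa j) (\<lambda>j. (1 - t) * wb j)"
  have cc: "ccS (to_real x) (partitions n) K y w" unfolding ccS_def
  proof (intro conjI ballI allI)
    show "finite K" by (simp add: K_def)
  next
    fix j assume "j \<in> K"
    then show "y j \<in> partitions n" "0 < w j" using A B ab by (auto simp: K_def y_def w_def ccS_def)
  next
    have "sum w K = t * sum wa {..<ka} + (1 - t) * sum wb {..<kb}"
      by (simp add: K_def sum.Plus w_def o_def sum_distrib_left)
    then show "sum w K = 1" using A B by (simp add: ccS_def)
  next
    fix i
    have "(\<Sum>j\<in>K. w j * real (y j i)) = t * (\<Sum>j<ka. wa j * real (ya j i)) + (1 - t) * (\<Sum>j<kb. wb j * real (yb j i))"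
      by (simp add: K_def sum.Plus w_def y_def o_def sum_distrib_left mult.assoc)
    also have "\<dots> = t * a i + (1 - t) * b i" using A B by (simp add: ccS_def)
    also have "\<dots> = to_real x i" using xab by metis
    finally show "to_real x i = (\<Sum>j\<in>K. w j * real (y j i))" by simp
  qed
  have exj: "\<exists>j\<in>K. y j \<noteq> x"
  proof (rule ccontr)
    assume "\<not> ?thesis"
    then have all: "\<forall>j\<in>K. y j = x" by blast
    have ha: "\<forall>j<ka. ya j = x"
    proof (intro allI impI)
      fix j assume "j < ka"
      then have "Inl j \<in> K" by (auto simp: K_def)
      then show "ya j = x" using all by (metis y_def sum.simps(5))
    qed
    have hb: "\<forall>j<kb. yb j = x"
    proof (intro allI impI)
      fix j assume "j < kb"
      then have "Inr j \<in> K" by (auto simp: K_def)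
      then show "yb j = x" using all by (metis y_def sum.simps(6))
    qed
    have "a = to_real x"
    proof
      fix i
      have "a i = (\<Sum>j<ka. wa j * real (ya j i))" using A by (simp add: ccS_def)
      also have "\<dots> = (\<Sum>j<ka. wa j * real (x i))" using ha by simp
      also have "\<dots> = real (x i)" using A by (simp add: ccS_def sum_distrib_right[symmetric])
      finally show "a i = to_real x i" by (simp add: to_real_def)
    qed
    moreover have "b = to_real x"
    proof
      fix i
      have "b i = (\<Sum>j<kb. wb j * real (yb j i))" using B by (simp add: ccS_def)
      also have "\<dots> = (\<Sum>j<kb. wb j * real (x i))" using hb by simp
      also have "\<dots> = real (x i)" using B by (simp add: ccS_def sum_distrib_right[symmetric])
      finally show "b i = to_real x i" by (simp add: to_real_def)
    qed
    ultimately show False using ab(3) by simp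
  qed
  have "conv_comb_of (to_real x) (partitions n - {x}) (card {j\<in>K. y j \<noteq> x})"
    by (rule ccS_to[OF remove_x[OF cc refl exj]])
  then show ?thesis by (rule exI)
qed

theorem theorem2:
  fixes n \<xi> :: nat
  assumes "0 < n" and "2 < \<xi>" and "C_xi \<xi> n \<noteq> {}"
  shows "real \<xi> \<le> log 2 (real n + 1) + 1"
proof -
  obtain x where "x \<in> C_xi \<xi> n" using assms(3) by blast
  then have x: "x \<in> partitions n" and nv: "to_real x \<notin> VertPn n" and xi: "xi_num n x = \<xi>"
    by (auto simp: C_xi_def)
  define Y where "Y = partitions n - {x}"
  have ex: "\<exists>k. conv_comb_of (to_real x) Y k" using exists_comb[OF x nv] by (simp add: Y_def)
  have L: "xi_num n x = (LEAST k. conv_comb_of (to_real x) Y k)" by (simp add: xi_num_def Y_def)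
  have hxi0: "conv_comb_of (to_real x) Y (LEAST k. conv_comb_of (to_real x) Y k)" by (rule LeastI_ex[OF ex])
  have hxi: "conv_comb_of (to_real x) Y \<xi>" using hxi0 L xi by simp
  have inj: "a = b" if "\<forall>i. a i \<le> x i" "\<forall>i. b i \<le> x i"
       "(\<Sum>i=1..n. i * a i) = (\<Sum>i=1..n. i * b i)" for a b
  proof (rule ccontr)
    assume "a \<noteq> b"
    have "conv_comb_of (to_real x) (partitions n - {x}) 2" by (rule mid[OF x that(1,2) \<open>a \<noteq> b\<close> that(3)])
    then have "conv_comb_of (to_real x) Y 2" unfolding Y_def .
    then have "(LEAST k. conv_comb_of (to_real x) Y k) \<le> 2" by (rule Least_le)
    then have "xi_num n x \<le> 2" using L by simp
    then show False using xi assms(2) by simp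
  qed
  define I where "I = {i. x i \<noteq> 0}"
  have cnt: "2 ^ card I \<le> n + 1" unfolding I_def by (rule count[OF x inj])
  have fI: "finite I"
  proof -
    have "I \<subseteq> {1..n}" using x by (auto simp: partitions_def I_def)
    then show ?thesis using finite_subset by blast
  qed
  have le: "\<xi> \<le> card I + 1"
  proof (rule ccontr)
    assume "\<not> ?thesis"
    then have big: "card I + 1 < card {..<\<xi>}" by simp
    obtain y w where cc: "ccS (to_real x) Y {..<\<xi>} y w" using cc_to_ccS[OF hxi] by blast
    have sup: "\<forall>j\<in>{..<\<xi>}. \<forall>i. y j i \<noteq> 0 \<longrightarrow> i \<in> I"
      using ccS_support[OF cc] by (simp add: I_def)
    obtain K' w' where K': "K' \<subseteq> {..<\<xi>}" "card K' < card {..<\<xi>}" "ccS (to_real x) Y K' y w'"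
      using cara_step[OF cc fI sup big] by blast
    have "conv_comb_of (to_real x) Y (card K')" using ccS_to[OF K'(3)] .
    moreover have "card K' < (LEAST k. conv_comb_of (to_real x) Y k)" using K'(2) xi L by simp
    then have "\<not> conv_comb_of (to_real x) Y (card K')" by (rule not_less_Least)
    ultimately show False by blast
  qed
  have "\<xi> - 1 \<le> card I" using le by simp
  then have "(2::nat) ^ (\<xi> - 1) \<le> 2 ^ card I" by (rule power_increasing) simp
  then have "2 ^ (\<xi> - 1) \<le> n + 1" using cnt by (rule order_trans)
  then have "real (\<xi> - 1) \<le> log 2 (real (n + 1))" by (rule le_log2_of_power)
  moreover have "real (\<xi> - 1) = real \<xi> - 1" using assms(2) by (simp add: of_nat_diff)
  moreover have "log 2 (real (n + 1)) = log 2 (real n + 1)" by (simp add: add.commute)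
  ultimately show ?thesis by linarith
qed

end
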